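(* Let $t\ge 2$ and let $S=\{s_1,\ldots,s_t\}\subseteq BS(1,3)$ with $s_i=b^{m_i}a^{x_i}$, where $x_1,\dots,x_t\in\mathbb Z$ and $1\le m_1<m_2<\cdots<m_t$ are integers, so $k=|S|=t$. If $S$ is non-abelian, then $|S^2|\geq 4k-4$.
   Context: $BS(1,3)=\langle a,b\mid ab=ba^3\rangle$, in which $(b^m a^x)(b^n a^y)=b^{m+n}a^{y+3^n x}$ for integers $m,n\ge0$ and $x,y\in\mathbb Z$. $S^2=\{st: s,t\in S\}$. A set is non-abelian if the subgroup it generates is non-abelian. *)

theory Defs
  imports Complex_Main "HOL-Algebra.Group" "HOL-Algebra.Generated_Groups"
begin

text \<open>The Baumslag--Solitar group BS(1,3) = <a,b | ab = ba^3>, realised as the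
  semidirect product Z[1/3] x| Z: the pair (m, x) stands for b^m a^x, with
  m an integer and x in Z[1/3] (stored as a rational).  Multiplication:
  (b^m a^x)(b^n a^y) = b^(m+n) a^(y + 3^n x).\<close>

definition Z3 :: "rat set" where
  "Z3 = {q. \<exists>(k::nat) (z::int). q = of_int z / 3 ^ k}"

definition bs_mult :: "int \<times> rat \<Rightarrow> int \<times> rat \<Rightarrow> int \<times> rat" where
  "bs_mult g h = (fst g + fst h, snd h + (3::rat) powi (fst h) * snd g)"

definition BS13 :: "(int \<times> rat) monoid" where
  "BS13 = \<lparr> carrier = {g. snd g \<in> Z3}, mult = bs_mult, one = (0, 0) \<rparr>"

definition bs_elem :: "int \<Rightarrow> int \<Rightarrow> int \<times> rat" where
  "bs_elem m x = (m, of_int x)"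

definition non_abelian :: "(int \<times> rat) set \<Rightarrow> bool" where
  "non_abelian S \<longleftrightarrow> (\<exists>g\<in>generate BS13 S. \<exists>h\<in>generate BS13 S. g \<otimes>\<^bsub>BS13\<^esub> h \<noteq> h \<otimes>\<^bsub>BS13\<^esub> g)"

definition setsq :: "(int \<times> rat) set \<Rightarrow> (int \<times> rat) set" where
  "setsq S = {bs_mult s t | s t. s \<in> S \<and> t \<in> S}"

end

theory Submission imports Defs begin

definition rt :: "int \<times> rat \<Rightarrow> rat" where
  "rt g = snd g / (3 powi fst g - 1)"

lemma fst_bs[simp]: "fst (bs_mult g h) = fst g + fst h" by (simp add: bs_mult_def)
lemma snd_bs[simp]: "snd (bs_mult g h) = snd h + 3 powi (fst h) * snd g" by (simp add: bs_mult_def)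

lemma pow_gt1: "1 \<le> k \<Longrightarrow> (1::rat) < 3 powi k"
proof -
  assume k: "1 \<le> k"
  then have e: "k = int (nat k)" by simp
  have "nat k \<noteq> 0" using k by simp
  then have "(1::rat) < 3 ^ nat k" by (simp add: one_less_power)
  then show ?thesis by (subst e) (simp only: power_int_of_nat)
qed

lemma alg_comm:
  fixes P Q x y :: rat assumes "P > 1" "Q > 1"
  shows "(y + Q * x = x + P * y) \<longleftrightarrow> x / (P - 1) = y / (Q - 1)"
proof -
  have "(y + Q * x = x + P * y) \<longleftrightarrow> x * (Q - 1) = y * (P - 1)" by (auto simp: algebra_simps)
  also have "\<dots> \<longleftrightarrow> x / (P - 1) = y / (Q - 1)" using assms by (simp add: field_simps)
  finally show ?thesis .
qed

lemma alg_same: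
  fixes P Q x y :: rat assumes "P > 1" "Q > 1" "x / (P - 1) = y / (Q - 1)"
  shows "(y + Q * x) / (P * Q - 1) = x / (P - 1)"
proof -
  define a where "a = x / (P - 1)"
  have x: "x = a * (P - 1)" unfolding a_def using assms(1) by simp
  have "a = y / (Q - 1)" using assms by (simp add: a_def)
  then have y: "y = a * (Q - 1)" using assms by simp
  have "P * Q > 1" using less_1_mult[OF assms(1,2)] .
  then have "P * Q - 1 \<noteq> 0" by simp
  moreover have "y + Q * x = a * (P * Q - 1)" unfolding x y by (simp add: algebra_simps)
  ultimately have "(y + Q * x) / (P * Q - 1) = a" by simp
  then show ?thesis by (simp add: a_def)
qed

lemma alg_diff:
  fixes P Q x y :: rat assumes "P > 1" "Q > 1" "x / (P - 1) \<noteq> y / (Q - 1)"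
  shows "(y + Q * x) / (P * Q - 1) \<noteq> x / (P - 1) \<and> (y + Q * x) / (P * Q - 1) \<noteq> y / (Q - 1)"
proof -
  define a where "a = x / (P - 1)"
  define b where "b = y / (Q - 1)"
  have x: "x = a * (P - 1)" unfolding a_def using assms(1) by simp
  have y: "y = b * (Q - 1)" unfolding b_def using assms(2) by simp
  have pq: "P * Q - 1 > 0" using less_1_mult[OF assms(1,2)] by simp
  have ab: "a \<noteq> b" using assms a_def b_def by simp
  have 1: "b * (Q - 1) + Q * (a * (P - 1)) \<noteq> a * (P * Q - 1)"
  proof
    assume "b * (Q - 1) + Q * (a * (P - 1)) = a * (P * Q - 1)"
    then have "(b - a) * (Q - 1) = 0" by (simp add: algebra_simps)
    then show False using ab assms by simp
  qed
  have 2: "b * (Q - 1) + Q * (a * (P - 1)) \<noteq> b * (P * Q - 1)"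
  proof
    assume "b * (Q - 1) + Q * (a * (P - 1)) = b * (P * Q - 1)"
    then have "(a - b) * (Q * (P - 1)) = 0" by (simp add: algebra_simps)
    then show False using ab assms by simp
  qed
  have e1: "(y + Q * x) / (P * Q - 1) \<noteq> a" using 1 pq unfolding x y by (simp add: divide_eq_eq)
  have e2: "(y + Q * x) / (P * Q - 1) \<noteq> b" using 2 pq unfolding x y by (simp add: divide_eq_eq)
  show ?thesis using e1 e2 by (simp add: a_def b_def)
qed


lemma pow_add3: "3 powi (a + b) = (3 powi a) * (3 powi b :: rat)"
  by (simp add: power_int_add)

lemma rt_comm:
  assumes "1 \<le> fst g" "1 \<le> fst h"
  shows "bs_mult g h = bs_mult h g \<longleftrightarrow> rt g = rt h"
proof -
  have "bs_mult g h = bs_mult h g \<longleftrightarrow> snd h + 3 powi fst h * snd g = snd g + 3 powi fst g * snd h"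
    by (simp add: prod_eq_iff add.commute)
  also have "\<dots> \<longleftrightarrow> rt g = rt h"
    unfolding rt_def by (rule alg_comm[OF pow_gt1[OF assms(1)] pow_gt1[OF assms(2)]])
  finally show ?thesis .
qed

lemma rt_same:
  assumes "1 \<le> fst g" "1 \<le> fst h" "rt g = rt h"
  shows "rt (bs_mult g h) = rt g"
  using alg_same[OF pow_gt1[OF assms(1)] pow_gt1[OF assms(2)]] assms(3)
  unfolding rt_def by (simp add: pow_add3)

lemma rt_diff:
  assumes "1 \<le> fst g" "1 \<le> fst h" "rt g \<noteq> rt h"
  shows "rt (bs_mult g h) \<noteq> rt g \<and> rt (bs_mult g h) \<noteq> rt h"
  using alg_diff[OF pow_gt1[OF assms(1)] pow_gt1[OF assms(2)]] assms(3)
  unfolding rt_def by (simp add: pow_add3)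

definition Tv :: "rat \<Rightarrow> (int \<times> rat) set" where
  "Tv v = {g. snd g = v * (3 powi fst g - 1)}"

lemma Tv_mult: "g \<in> Tv v \<Longrightarrow> h \<in> Tv v \<Longrightarrow> bs_mult g h \<in> Tv v"
proof -
  assume a: "g \<in> Tv v" "h \<in> Tv v"
  define P where "P = (3::rat) powi fst g"
  define Q where "Q = (3::rat) powi fst h"
  have e: "snd g = v * (P - 1)" "snd h = v * (Q - 1)" using a by (simp_all add: Tv_def P_def Q_def)
  have "snd h + Q * snd g = v * (P * Q - 1)" unfolding e by (simp add: algebra_simps)
  then show ?thesis unfolding Tv_def by (simp add: pow_add3 P_def[symmetric] Q_def[symmetric])
qed

lemma Tv_comm: "g \<in> Tv v \<Longrightarrow> h \<in> Tv v \<Longrightarrow> bs_mult g h = bs_mult h g"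
proof -
  assume a: "g \<in> Tv v" "h \<in> Tv v"
  define P where "P = (3::rat) powi fst g"
  define Q where "Q = (3::rat) powi fst h"
  have e: "snd g = v * (P - 1)" "snd h = v * (Q - 1)" using a by (simp_all add: Tv_def P_def Q_def)
  have "snd h + Q * snd g = snd g + P * snd h" unfolding e by (simp add: algebra_simps)
  then show ?thesis by (simp add: prod_eq_iff P_def[symmetric] Q_def[symmetric] add.commute)
qed

lemma inv_BS: "inv\<^bsub>BS13\<^esub> (int n, of_int x) = (- int n, - of_int x / 3 ^ n)"
proof -
  have c: "(- int n, - of_int x / 3 ^ n) \<in> carrier BS13"
    unfolding BS13_def Z3_def by (auto intro!: exI[of _ n] exI[of _ "-x"])
  show ?thesis
    unfolding m_inv_def
  proof (rule the_equality)
    show "(- int n, - of_int x / 3 ^ n) \<in> carrier BS13 \<and>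
      (int n, of_int x) \<otimes>\<^bsub>BS13\<^esub> (- int n, - of_int x / 3 ^ n) = \<one>\<^bsub>BS13\<^esub> \<and>
      (- int n, - of_int x / 3 ^ n) \<otimes>\<^bsub>BS13\<^esub> (int n, of_int x) = \<one>\<^bsub>BS13\<^esub>"
      using c by (simp add: BS13_def bs_mult_def power_int_minus field_simps)
  next
    fix y assume "y \<in> carrier BS13 \<and> (int n, of_int x) \<otimes>\<^bsub>BS13\<^esub> y = \<one>\<^bsub>BS13\<^esub> \<and>
      y \<otimes>\<^bsub>BS13\<^esub> (int n, of_int x) = \<one>\<^bsub>BS13\<^esub>"
    then have e: "bs_mult (int n, of_int x) y = (0, 0)" by (simp add: BS13_def)
    then have f: "fst y = - int n" by (simp add: bs_mult_def)
    then have "snd y + 3 powi (- int n) * of_int x = 0" using e by (simp add: bs_mult_def)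
    then have "snd y = - of_int x / 3 ^ n" by (simp add: power_int_minus field_simps)
    then show "y = (- int n, - of_int x / 3 ^ n)" using f by (simp add: prod_eq_iff)
  qed
qed

lemma mult_BS: "x \<otimes>\<^bsub>BS13\<^esub> y = bs_mult x y"
  by (simp add: BS13_def)

lemma nonab_ex:
  assumes form: "\<forall>g\<in>S. \<exists>n x. g = (int n, of_int x) \<and> n \<ge> 1"
    and na: "non_abelian S"
  shows "\<exists>g\<in>S. \<exists>h\<in>S. rt g \<noteq> rt h"
proof (rule ccontr)
  assume "\<not> ?thesis"
  then have all: "\<forall>g\<in>S. \<forall>h\<in>S. rt g = rt h" by blast
  have "\<exists>v. \<forall>g\<in>S. rt g = v"
  proof (cases "S = {}")
    case True then show ?thesis by simp
  next
    case False
    then obtain s0 where "s0 \<in> S" by blast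
    then show ?thesis using all by blast
  qed
  then obtain v where v: "\<forall>g\<in>S. rt g = v" by blast
  have sub: "z \<in> Tv v" if "z \<in> generate BS13 S" for z
    using that
  proof induction
    case one
    then show ?case by (simp add: BS13_def Tv_def)
  next
    case (incl h)
    then obtain n x where h: "h = (int n, of_int x)" "n \<ge> 1" using form by blast
    have p: "(1::rat) < 3 ^ n" using h(2) by (simp add: one_less_power)
    have "rt h = v" using v incl by blast
    then have "of_int x / (3 ^ n - 1) = v" unfolding rt_def h by simp
    then have "of_int x = v * (3 ^ n - 1)" using p by (simp add: divide_eq_eq)
    then show ?case by (simp add: Tv_def h)
  next
    case (inv h)
    then obtain n x where h: "h = (int n, of_int x)" "n \<ge> 1" using form by blast
    have p: "(1::rat) < 3 ^ n" using h(2) by (simp add: one_less_power)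
    have "rt h = v" using v inv by blast
    then have "of_int x / (3 ^ n - 1) = v" unfolding rt_def h by simp
    then have xv: "of_int x = v * (3 ^ n - 1)" using p by (simp add: divide_eq_eq)
    have p0: "(3::rat) ^ n \<noteq> 0" by simp
    have "v * (inverse (3 ^ n) - 1) = - (v * (3 ^ n - 1)) / (3::rat) ^ n"
      using p0 by (simp add: field_simps)
    then have "- of_int x / 3 ^ n = v * (3 powi (- int n) - 1)"
      unfolding xv by (simp add: power_int_minus)
    then show ?case unfolding h inv_BS Tv_def by simp
  next
    case (eng h1 h2)
    then show ?case unfolding mult_BS using Tv_mult by blast
  qed
  obtain g h where gh: "g \<in> generate BS13 S" "h \<in> generate BS13 S"
    "g \<otimes>\<^bsub>BS13\<^esub> h \<noteq> h \<otimes>\<^bsub>BS13\<^esub> g"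
    using na unfolding non_abelian_def by blast
  have "bs_mult g h = bs_mult h g" using Tv_comm sub gh(1,2) by blast
  then show False using gh(3) unfolding mult_BS by simp
qed

lemma fst_neq: "fst a \<noteq> fst b \<Longrightarrow> a \<noteq> b" by auto

lemma setsq_mem: "a \<in> S \<Longrightarrow> b \<in> S \<Longrightarrow> bs_mult a b \<in> setsq S"
  unfolding setsq_def by blast

lemma setsq_E: "z \<in> setsq S \<Longrightarrow> (\<And>a b. a \<in> S \<Longrightarrow> b \<in> S \<Longrightarrow> z = bs_mult a b \<Longrightarrow> P) \<Longrightarrow> P"
  unfolding setsq_def by blast

lemma setsq_fin: "finite S \<Longrightarrow> finite (setsq S)"
proof -
  assume "finite S"
  have "setsq S = (\<lambda>(a, b). bs_mult a b) ` (S \<times> S)" unfolding setsq_def by auto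
  then show ?thesis using \<open>finite S\<close> by simp
qed

lemma setsq_mono: "A \<subseteq> B \<Longrightarrow> setsq A \<subseteq> setsq B"
  unfolding setsq_def by blast

lemma exmax: "finite S \<Longrightarrow> S \<noteq> {} \<Longrightarrow> \<exists>u\<in>S. \<forall>g\<in>S. fst g \<le> (fst u :: int)"
proof -
  assume a: "finite S" "S \<noteq> {}"
  then have "Max (fst ` S) \<in> fst ` S" by simp
  then obtain u where "u \<in> S" "fst u = Max (fst ` S)" by auto
  moreover have "\<forall>g\<in>S. fst g \<le> Max (fst ` S)" using a by simp
  ultimately show ?thesis by (intro bexI[of _ u]) auto
qed

lemma exmin: "finite S \<Longrightarrow> S \<noteq> {} \<Longrightarrow> \<exists>u\<in>S. \<forall>g\<in>S. fst u \<le> (fst g :: int)"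
proof -
  assume a: "finite S" "S \<noteq> {}"
  then have "Min (fst ` S) \<in> fst ` S" by simp
  then obtain u where "u \<in> S" "fst u = Min (fst ` S)" by auto
  moreover have "\<forall>g\<in>S. Min (fst ` S) \<le> fst g" using a by simp
  ultimately show ?thesis by (intro bexI[of _ u]) auto
qed

lemma count_new: "finite C \<Longrightarrow> B \<subseteq> C \<Longrightarrow> D \<subseteq> C \<Longrightarrow> B \<inter> D = {} \<Longrightarrow> card B + card D \<le> card C"
proof -
  assume a: "finite C" "B \<subseteq> C" "D \<subseteq> C" "B \<inter> D = {}"
  have fB: "finite B" using a(1,2) by (rule finite_subset[rotated])
  have fD: "finite D" using a(1,3) by (rule finite_subset[rotated])
  have "card (B \<union> D) = card B + card D" using card_Un_disjoint[OF fB fD a(4)] .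
  moreover have "card (B \<union> D) \<le> card C" using a by (intro card_mono) auto
  ultimately show ?thesis by simp
qed

lemma inj_left: "inj_on fst S \<Longrightarrow> inj_on (\<lambda>g. bs_mult a g) S"
proof (rule inj_onI)
  fix g g' assume i: "inj_on fst S" and gg: "g \<in> S" "g' \<in> S" "bs_mult a g = bs_mult a g'"
  have "fst (bs_mult a g) = fst (bs_mult a g')" using gg(3) by (rule arg_cong)
  then have "fst g = fst g'" by simp
  then show "g = g'" using inj_onD[OF i _ gg(1,2)] by blast
qed

lemma inj_right: "inj_on fst S \<Longrightarrow> inj_on (\<lambda>g. bs_mult g a) S"
proof (rule inj_onI)
  fix g g' assume i: "inj_on fst S" and gg: "g \<in> S" "g' \<in> S" "bs_mult g a = bs_mult g' a"
  have "fst (bs_mult g a) = fst (bs_mult g' a)" using gg(3) by (rule arg_cong)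
  then have "fst g = fst g'" by simp
  then show "g = g'" using inj_onD[OF i _ gg(1,2)] by blast
qed

lemma sq_lower:
  assumes fin: "finite S" and ne: "S \<noteq> {}" and inj: "inj_on fst S"
  shows "2 * card S - 1 \<le> card (setsq S)"
proof -
  obtain a where a: "a \<in> S" "\<forall>g\<in>S. fst a \<le> fst g" using exmin[OF fin ne] by blast
  obtain b where b: "b \<in> S" "\<forall>g\<in>S. fst g \<le> fst b" using exmax[OF fin ne] by blast
  define X where "X = (\<lambda>g. bs_mult a g) ` S"
  define Y where "Y = (\<lambda>g. bs_mult b g) ` S"
  have injX: "inj_on (\<lambda>g. bs_mult a g) S" using inj_left[OF inj] .
  have injY: "inj_on (\<lambda>g. bs_mult b g) S" using inj_left[OF inj] .
  have cX: "card X = card S" unfolding X_def using card_image[OF injX] .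
  have cY: "card Y = card S" unfolding Y_def using card_image[OF injY] .
  have XY: "X \<inter> Y \<subseteq> {bs_mult a b}"
  proof
    fix z assume "z \<in> X \<inter> Y"
    then obtain g h where gh: "g \<in> S" "h \<in> S" "z = bs_mult a g" "z = bs_mult b h"
      unfolding X_def Y_def by blast
    have "fst (bs_mult a g) = fst (bs_mult b h)" using gh(3,4) by simp
    then have "fst a + fst g = fst b + fst h" by (simp only: fst_bs)
    moreover have "fst g \<le> fst b" "fst a \<le> fst h" using a b gh by auto
    ultimately have "fst g = fst b" by linarith
    then have "g = b" using inj_onD[OF inj _ gh(1) b(1)] by blast
    then show "z \<in> {bs_mult a b}" using gh by simp
  qed
  have cXY: "card (X \<inter> Y) \<le> 1"
    using card_mono[OF _ XY] by simp
  have finXY: "finite X" "finite Y" unfolding X_def Y_def using fin by auto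
  have "card X + card Y = card (X \<union> Y) + card (X \<inter> Y)"
    using card_Un_Int[OF finXY] .
  moreover have "X \<union> Y \<subseteq> setsq S" unfolding X_def Y_def using a b by (auto intro: setsq_mem)
  then have "card (X \<union> Y) \<le> card (setsq S)" using card_mono[OF setsq_fin[OF fin]] by blast
  ultimately show ?thesis using cX cY cXY by linarith
qed


lemma main:
  assumes "finite S" "\<forall>g\<in>S. 1 \<le> fst g" "inj_on fst S" "g \<in> S" "h \<in> S" "rt g \<noteq> rt h"
  shows "4 * card S - 4 \<le> card (setsq S)"
  using assms
proof (induction "card S" arbitrary: S g h rule: less_induct)
  case less
  note fin = less.prems(1) and pos = less.prems(2) and inj = less.prems(3)
  obtain u where u: "u \<in> S" "\<forall>p\<in>S. fst p \<le> fst u" using exmax[OF fin] less.prems(4) by blast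
  have ult: "fst p < fst u" if "p \<in> S" "p \<noteq> u" for p
  proof -
    have "fst p \<le> fst u" using u that by blast
    moreover have "fst p \<noteq> fst u" using inj_onD[OF inj _ that(1) u(1)] that(2) by blast
    ultimately show ?thesis by linarith
  qed
  define S' where "S' = S - {u}"
  have finS': "finite S'" using fin S'_def by simp
  have S'sub: "S' \<subseteq> S" using S'_def by blast
  have cardS': "card S' = card S - 1" using S'_def u(1) fin by simp
  have pos': "\<forall>p\<in>S'. 1 \<le> fst p" using pos S'sub by blast
  have inj': "inj_on fst S'" using inj S'sub inj_on_subset by blast
  have ghne: "g \<noteq> h" using less.prems(6) by blast
  have S'ne: "S' \<noteq> {}" using ghne less.prems(4,5) S'_def by blast
  obtain v where v: "v \<in> S'" "\<forall>p\<in>S'. fst p \<le> fst v" using exmax[OF finS' S'ne] by blast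
  have vS: "v \<in> S" "v \<noteq> u" using v S'_def by auto
  have vlt: "fst p < fst v" if "p \<in> S'" "p \<noteq> v" for p
  proof -
    have "fst p \<le> fst v" using v that by blast
    moreover have "fst p \<noteq> fst v" using inj_onD[OF inj' _ that(1) v(1)] that(2) by blast
    ultimately show ?thesis by linarith
  qed
  have fvu: "fst v < fst u" using ult vS by blast
  have inS': "p \<in> S'" if "p \<in> S" "p \<noteq> u" for p using that S'_def by blast
  have lev: "fst z \<le> 2 * fst v" if "z \<in> setsq S'" for z
  proof (rule setsq_E[OF that])
    fix p q assume pq: "p \<in> S'" "q \<in> S'" "z = bs_mult p q"
    have "fst p \<le> fst v" "fst q \<le> fst v" using v(2) pq by auto
    then show ?thesis using pq by simp
  qed
  have sub: "setsq S' \<subseteq> setsq S" using setsq_mono[OF S'sub] .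
  have finsq: "finite (setsq S)" using setsq_fin[OF fin] .
  have posu: "1 \<le> fst u" "1 \<le> fst v" using pos u vS by auto
  show ?case
  proof (cases "\<exists>g'\<in>S'. \<exists>h'\<in>S'. rt g' \<noteq> rt h'")
    case True
    then obtain g' h' where gh': "g' \<in> S'" "h' \<in> S'" "rt g' \<noteq> rt h'" by blast
    have "card S > 0" using fin u(1) card_gt_0_iff by blast
    then have lessc: "card S' < card S" using cardS' by linarith
    have IH: "4 * card S' - 4 \<le> card (setsq S')"
      using less.hyps[OF lessc finS' pos' inj' gh'(1) gh'(2) gh'(3)] .
    have c2: "card S' \<ge> 2"
    proof -
      have "g' \<noteq> h'" using gh'(3) by blast
      then have "card {g', h'} = 2" by simp
      moreover have "{g', h'} \<subseteq> S'" using gh' by blast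
      ultimately show ?thesis using card_mono[OF finS', of "{g', h'}"] by simp
    qed
    have "\<exists>D. D \<subseteq> setsq S \<and> D \<inter> setsq S' = {} \<and> card D = 4"
    proof (cases "rt u = rt v")
      case False
      define S'' where "S'' = S' - {v}"
      have "g' \<noteq> h'" using gh'(3) by blast
      then have S''ne: "S'' \<noteq> {}" using gh' S''_def by blast
      obtain w where w: "w \<in> S''" "\<forall>p\<in>S''. fst p \<le> fst w" using exmax[of S''] finS' S''ne S''_def by auto
      have wS: "w \<in> S'" "w \<noteq> v" "w \<in> S" using w S''_def S'sub by auto
      have fwv: "fst w < fst v" using vlt wS by blast
      have wp: "fst p \<le> fst w" if "p \<in> S'" "p \<noteq> v" for p using w S''_def that by blast
      have posw: "1 \<le> fst w" using pos wS by auto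
      have k: "z = bs_mult v v" if "z \<in> setsq S'" "fst z = fst u + fst w" for z
        using that(1)
      proof (rule setsq_E)
        fix p q assume pq: "p \<in> S'" "q \<in> S'" "z = bs_mult p q"
        then have e: "fst p + fst q = fst u + fst w" using that(2) by simp
        have "fst p \<le> fst v" "fst q \<le> fst v" using v pq by auto
        then have gq: "fst q > fst w" and gp: "fst p > fst w" using e fvu by linarith+
        have "p = v"
        proof (rule ccontr)
          assume "p \<noteq> v" then have "fst p \<le> fst w" using wp pq by blast
          then show False using gp by linarith
        qed
        moreover have "q = v"
        proof (rule ccontr)
          assume "q \<noteq> v" then have "fst q \<le> fst w" using wp pq by blast
          then show False using gq by linarith
        qed
        ultimately show ?thesis using pq by simp
      qed
      have z: "bs_mult u w \<notin> setsq S' \<or> bs_mult w u \<notin> setsq S'"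
      proof (rule ccontr)
        assume "\<not> ?thesis"
        then have "bs_mult u w = bs_mult v v" "bs_mult w u = bs_mult v v"
          using k by auto
        then have c: "bs_mult u w = bs_mult w u" by simp
        then have "rt u = rt w" using rt_comm posu posw by blast
        then have "rt (bs_mult u w) = rt u" using rt_same posu posw by blast
        moreover have "rt (bs_mult v v) = rt v" using rt_same posu by blast
        ultimately show False using False \<open>bs_mult u w = bs_mult v v\<close> by simp
      qed
      then obtain z where z: "z \<in> setsq S" "z \<notin> setsq S'" "fst z = fst u + fst w"
        using setsq_mem u wS by (metis add.commute fst_bs)
      have nuv: "bs_mult u v \<noteq> bs_mult v u" using rt_comm posu False by blast
      define D where "D = {bs_mult u u, bs_mult u v, bs_mult v u, z}"
      have ne: "bs_mult u u \<noteq> bs_mult u v" "bs_mult u u \<noteq> bs_mult v u" "bs_mult u u \<noteq> z"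
        "bs_mult u v \<noteq> z" "bs_mult v u \<noteq> z"
        by (intro fst_neq; use fvu fwv z in simp)+
      have "card D = 4" unfolding D_def using nuv ne by simp
      moreover have "D \<subseteq> setsq S" unfolding D_def using z u vS by (auto intro: setsq_mem)
      moreover have "D \<inter> setsq S' = {}"
      proof -
        have "a \<notin> setsq S'" if ha: "fst a > 2 * fst v" for a
        proof
          assume "a \<in> setsq S'"
          then have "fst a \<le> 2 * fst v" by (rule lev)
          then show False using ha by linarith
        qed
        then show ?thesis unfolding D_def using z fvu by auto
      qed
      ultimately show ?thesis by blast
    next
      case True
      define J where "J = {p \<in> S. rt p \<noteq> rt u}"
      have Jne: "J \<noteq> {}"
      proof (cases "rt g' = rt u")
        case True
        then have "h' \<in> J" using gh' S'sub J_def by auto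
        then show ?thesis by blast
      next
        case False
        then have "g' \<in> J" using gh' S'sub J_def by auto
        then show ?thesis by blast
      qed
      obtain j where j: "j \<in> J" "\<forall>p\<in>J. fst p \<le> fst j" using exmax[of J] fin Jne J_def by auto
      have jS: "j \<in> S" "rt j \<noteq> rt u" using j J_def by auto
      have jnu: "j \<noteq> u" using jS(2) by blast
      have jS': "j \<in> S'" "j \<noteq> v" using jS(1) jnu inS' apply blast using jS(2) True by metis
      have fjv: "fst j < fst v" using vlt jS' by blast
      have posj: "1 \<le> fst j" using pos jS by auto
      have big: "rt p = rt u" if "p \<in> S" "fst j < fst p" for p
      proof (rule ccontr)
        assume "rt p \<noteq> rt u"
        then have "p \<in> J" using that(1) J_def by blast
        then have "fst p \<le> fst j" using j(2) by blast
        then show False using that(2) by linarith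
      qed
      have nz: "rt z = rt u" if "z \<in> setsq S'" "fst z = fst u + fst j" for z
        using that(1)
      proof (rule setsq_E)
        fix p q assume pq: "p \<in> S'" "q \<in> S'" "z = bs_mult p q"
        then have e: "fst p + fst q = fst u + fst j" using that(2) by simp
        have "fst p \<le> fst v" "fst q \<le> fst v" using v pq by auto
        then have gq: "fst q > fst j" and gp: "fst p > fst j" using e fvu by linarith+
        have pS: "p \<in> S" "q \<in> S" using pq S'sub by auto
        have r: "rt p = rt u" "rt q = rt u" using big[OF pS(1) gp] big[OF pS(2) gq] by auto
        have "1 \<le> fst p" "1 \<le> fst q" using pos' pq by auto
        then show ?thesis using rt_same r pq by metis
      qed
      have d1: "rt (bs_mult u j) \<noteq> rt u" "rt (bs_mult j u) \<noteq> rt u"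
        using rt_diff[OF posu(1) posj] rt_diff[OF posj posu(1)] jS(2) by auto
      have nuj: "bs_mult u j \<noteq> bs_mult j u" using rt_comm posu posj jS(2) by metis
      define D where "D = {bs_mult u u, bs_mult u v, bs_mult u j, bs_mult j u}"
      have ne: "bs_mult u u \<noteq> bs_mult u v" "bs_mult u u \<noteq> bs_mult u j" "bs_mult u u \<noteq> bs_mult j u"
        "bs_mult u v \<noteq> bs_mult u j" "bs_mult u v \<noteq> bs_mult j u"
        by (intro fst_neq; use fvu fjv in simp)+
      have "card D = 4" unfolding D_def using nuj ne by simp
      moreover have "D \<subseteq> setsq S" unfolding D_def using jS u vS by (auto intro: setsq_mem)
      moreover have "D \<inter> setsq S' = {}"
      proof -
        have "a \<notin> setsq S'" if ha: "fst a > 2 * fst v" for a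
        proof
          assume "a \<in> setsq S'"
          then have "fst a \<le> 2 * fst v" by (rule lev)
          then show False using ha by linarith
        qed
        moreover have "bs_mult u j \<notin> setsq S'"
        proof
          assume "bs_mult u j \<in> setsq S'"
          then have "rt (bs_mult u j) = rt u" using nz[of "bs_mult u j"] by simp
          then show False using d1 by simp
        qed
        moreover have "bs_mult j u \<notin> setsq S'"
        proof
          assume "bs_mult j u \<in> setsq S'"
          then have "rt (bs_mult j u) = rt u" using nz[of "bs_mult j u"] by simp
          then show False using d1 by simp
        qed
        ultimately show ?thesis unfolding D_def using fvu by auto
      qed
      ultimately show ?thesis by blast
    qed
    then obtain D where D: "D \<subseteq> setsq S" "D \<inter> setsq S' = {}" "card D = 4" by blast
    have "card (setsq S') + card D \<le> card (setsq S)"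
      using count_new[OF finsq sub D(1)] D(2) by blast
    then show ?thesis using IH D(3) cardS' c2 by linarith
  next
    case False
    then have allr: "\<forall>p\<in>S'. rt p = rt v" using v by blast
    have ru: "rt u \<noteq> rt v"
    proof
      assume e: "rt u = rt v"
      have "rt p = rt v" if "p \<in> S" for p
      proof (cases "p = u")
        case True then show ?thesis using e by simp
      next
        case False then show ?thesis using allr inS' that by blast
      qed
      then show False using less.prems(4,5,6) by metis
    qed
    define X where "X = (\<lambda>p. bs_mult u p) ` S'"
    define Y where "Y = (\<lambda>p. bs_mult p u) ` S'"
    define D where "D = insert (bs_mult u u) (X \<union> Y)"
    have injX: "inj_on (\<lambda>p. bs_mult u p) S'" using inj_left[OF inj'] .
    have injY: "inj_on (\<lambda>p. bs_mult p u) S'" using inj_right[OF inj'] .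
    have cX: "card X = card S'" unfolding X_def using card_image[OF injX] .
    have cY: "card Y = card S'" unfolding Y_def using card_image[OF injY] .
    have finXY: "finite X" "finite Y" unfolding X_def Y_def using finS' by auto
    have XY: "X \<inter> Y = {}"
    proof (rule ccontr)
      assume "X \<inter> Y \<noteq> {}"
      then obtain p q where pq: "p \<in> S'" "q \<in> S'" "bs_mult u p = bs_mult q u"
        unfolding X_def Y_def by blast
      then have "fst p = fst q" by (metis add.commute add_left_cancel fst_bs)
      then have "p = q" using inj' pq unfolding inj_on_def by blast
      then have "rt u = rt p" using rt_comm[OF posu(1), of p] pq pos' by simp
      then show False using ru allr pq by simp
    qed
    have uXY: "bs_mult u u \<notin> X \<union> Y"
    proof
      assume "bs_mult u u \<in> X \<union> Y"
      then obtain p where p: "p \<in> S'" "bs_mult u u = bs_mult u p \<or> bs_mult u u = bs_mult p u"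
        unfolding X_def Y_def by blast
      then have "fst (bs_mult u u) = fst (bs_mult u p) \<or> fst (bs_mult u u) = fst (bs_mult p u)"
        by metis
      then have "fst p = fst u" by auto
      moreover have "p \<in> S" "p \<noteq> u" using p(1) S'_def by auto
      ultimately show False using ult[of p] by simp
    qed
    have cD: "card D = 2 * card S' + 1"
      unfolding D_def using uXY finXY card_Un_disjoint[OF finXY XY] cX cY by simp
    have Dsub: "D \<subseteq> setsq S" unfolding D_def X_def Y_def
      using u(1) S'sub setsq_mem[of _ S] by blast
    have rS': "rt z = rt v" if "z \<in> setsq S'" for z
      using that
    proof (rule setsq_E)
      fix p q assume pq: "p \<in> S'" "q \<in> S'" "z = bs_mult p q"
      have "1 \<le> fst p" "1 \<le> fst q" using pos' pq by auto
      then show ?thesis using rt_same allr pq by metis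
    qed
    have rD: "rt z \<noteq> rt v" if "z \<in> D" for z
    proof -
      have "rt (bs_mult u u) = rt u" using rt_same posu by blast
      moreover have "rt (bs_mult u p) \<noteq> rt v" if "p \<in> S'" for p
        using rt_diff[OF posu(1), of p] pos' that allr ru by auto
      moreover have "rt (bs_mult p u) \<noteq> rt v" if "p \<in> S'" for p
        using rt_diff[OF _ posu(1), of p] pos' that allr ru by auto
      ultimately show ?thesis using that ru unfolding D_def X_def Y_def by auto
    qed
    have "D \<inter> setsq S' = {}" using rD rS' by blast
    then have "card (setsq S') + card D \<le> card (setsq S)"
      using count_new[OF finsq sub Dsub] by blast
    moreover have "2 * card S' - 1 \<le> card (setsq S')" using sq_lower[OF finS' S'ne inj'] .
    moreover have "card S' \<ge> 1" using S'ne finS' by (simp add: Suc_le_eq card_gt_0_iff)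
    ultimately show ?thesis using cD cardS' by linarith
  qed
qed


theorem lemma2p4:
  fixes t :: nat and m :: "nat \<Rightarrow> nat" and x :: "nat \<Rightarrow> int" and S :: "(int \<times> rat) set"
  assumes "t \<ge> 2"
    and "m 1 \<ge> 1"
    and "\<And>i j. 1 \<le> i \<Longrightarrow> i < j \<Longrightarrow> j \<le> t \<Longrightarrow> m i < m j"
    and "S = (\<lambda>i. bs_elem (int (m i)) (x i)) ` {1..t}"
    and "non_abelian S"
  shows "card (setsq S) \<ge> 4 * card S - 4"
proof -
  have mge: "1 \<le> m i" if "i \<in> {1..t}" for i
  proof (cases "i = 1")
    case True then show ?thesis using assms(2) by simp
  next
    case False
    then have "m 1 < m i" using assms(3)[of 1 i] that by simp
    then show ?thesis using assms(2) by simp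
  qed
  have minj: "i = j" if "i \<in> {1..t}" "j \<in> {1..t}" "m i = m j" for i j
  proof (rule ccontr)
    assume "i \<noteq> j"
    then consider "i < j" | "j < i" by linarith
    then show False
    proof cases
      case 1 then show ?thesis using assms(3)[of i j] that by simp
    next
      case 2 then show ?thesis using assms(3)[of j i] that by simp
    qed
  qed
  have fin: "finite S" using assms(4) by simp
  have form: "\<forall>g\<in>S. \<exists>n y. g = (int n, of_int y) \<and> n \<ge> 1"
    using assms(4) mge unfolding bs_elem_def by blast
  have pos: "\<forall>g\<in>S. 1 \<le> fst g"
    using assms(4) mge unfolding bs_elem_def by force
  have inj: "inj_on fst S"
  proof (rule inj_onI)
    fix g h assume g: "g \<in> S" and h: "h \<in> S" and e: "fst g = fst h"
    obtain i where i: "i \<in> {1..t}" "g = bs_elem (int (m i)) (x i)" using g assms(4) by blast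
    obtain j where j: "j \<in> {1..t}" "h = bs_elem (int (m j)) (x j)" using h assms(4) by blast
    have "m i = m j" using e i j unfolding bs_elem_def by simp
    then have "i = j" using minj i j by blast
    then show "g = h" using i j by simp
  qed
  obtain g h where gh: "g \<in> S" "h \<in> S" "rt g \<noteq> rt h"
    using nonab_ex[OF form assms(5)] by blast
  show ?thesis using main[OF fin pos inj gh] .
qed

end
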